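(* Let $n,m\in\mathbb Z$ and $k\ge0$. Then, in $\mathbb C_w[x,x^{-1},y,y^{-1}]$, \[ \binom{n+m}{k}_w=\sum_{j=0}^{k}\binom{n}{j}_w\Big(x^jy^{n-j}\,\binom{m}{k-j}_w\,y^{j-n}x^{-j}\Big)\prod_{i=1}^{k-j}W(i+j,n-j), \] and this is an identity in the commutative ring $\mathbb C[(w(s,t))_{s,t\in\mathbb Z}]$ (after evaluating the conjugations).
   Context: Let $(w(s,t))_{s,t\in\mathbb Z}$ be commuting invertible variables, and $\mathbb C_w[x,x^{-1},y,y^{-1}]$ the associative unital $\mathbb C$-algebra generated by $x^{\pm1},y^{\pm1}$ and the $w(s,t)^{\pm1}$ subject to $x^{-1}x=xx^{-1}=1$, $y^{-1}y=yy^{-1}=1$, $yx=w(1,1)xy$, $x\,w(s,t)=w(s+1,t)x$, $y\,w(s,t)=w(s,t+1)y$. (Consequently, for any expression $f$ in the weights, $x^jy^{n-j}fy^{j-n}x^{-j}$ is $f$ with each $w(s,t)$ replaced by $w(s+j,t+n-j)$.) Product convention: $\prod_{j=l}^m A_j=A_l\cdots A_m$ if $m>l-1$, $=1$ if $m=l-1$, $=A_{l-1}^{-1}\cdots A_{m+1}^{-1}$ if $m<l-1$. $W(s,t)=\prod_{j=1}^tw(s,j)$. $\binom nk_w$ ($n,k\in\mathbb Z$) is the unique family with $\binom n0_w=\binom nn_w=1$ for all $n$ and $\binom{n+1}{k}_w=\binom nk_w+\binom n{k-1}_wW(k,n+1-k)$ whenever $(n+1,k)\ne(0,0)$. *)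

theory Defs
  imports Main
begin

definition gprod :: "(int \<Rightarrow> 'a::field) \<Rightarrow> int \<Rightarrow> int \<Rightarrow> 'a" where
  "gprod A l m = (if l \<le> m + 1 then (\<Prod>j\<in>{l..m}. A j)
                  else (\<Prod>j\<in>{m+1..l-1}. inverse (A j)))"

definition bigW :: "(int \<Rightarrow> int \<Rightarrow> 'a::field) \<Rightarrow> int \<Rightarrow> int \<Rightarrow> 'a" where
  "bigW w s t = gprod (w s) 1 t"

definition wbinom :: "(int \<Rightarrow> int \<Rightarrow> 'a::field) \<Rightarrow> int \<Rightarrow> int \<Rightarrow> 'a" where
  "wbinom w = (THE f. (\<forall>n. f n 0 = 1 \<and> f n n = 1) \<and>
      (\<forall>n k. (n + 1, k) \<noteq> (0, 0) \<longrightarrow>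
          f (n + 1) k = f n k + f n (k - 1) * bigW w k (n + 1 - k)))"

end

theory Submission
  imports Defs
begin


lemma gprod_empty[simp]: "gprod A l (l - 1) = 1"
  by (simp add: gprod_def)

lemma gprod_empty2[simp]: "gprod A (m + 1) m = 1"
  by (simp add: gprod_def)

lemma gprod_step:
  fixes A :: "int \<Rightarrow> 'a::field"
  assumes nz: "\<forall>t. A t \<noteq> 0"
  shows "gprod A l (m + 1) = gprod A l m * A (m + 1)"
proof (cases "l \<le> m + 1")
  case True
  have "{l..m+1} = insert (m+1) {l..m}" using True by auto
  have l1: "l \<le> m + 1 + 1" "l \<le> m + 1" using True by auto
  have "(\<Prod>j\<in>{l..m+1}. A j) = (\<Prod>j\<in>{l..m}. A j) * A (m + 1)"
    using \<open>{l..m+1} = insert (m+1) {l..m}\<close> by (simp add: mult.commute)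
  then show ?thesis unfolding gprod_def using l1 by simp
next
  case False
  show ?thesis
  proof (cases "l = m + 2")
    case True
    have "{m+1..l-1} = {m+1}" using True by auto
    have "gprod A l m = (\<Prod>j\<in>{m+1..l-1}. inverse (A j))" using False unfolding gprod_def by (simp only: if_False)
    also have "\<dots> = inverse (A (m+1))" unfolding \<open>{m+1..l-1} = {m+1}\<close> by simp
    finally have "gprod A l m = inverse (A (m+1))" .
    moreover have "gprod A l (m+1) = 1" using True by (simp add: gprod_def)
    ultimately show ?thesis using nz by simp
  next
    case F2: False
    have "{m+1..l-1} = insert (m+1) {m+1+1..l-1}" using False F2 by auto
    have "gprod A l m = (\<Prod>j\<in>{m+1..l-1}. inverse (A j))" using False unfolding gprod_def by (simp only: if_False)
    also have "\<dots> = inverse (A (m+1)) * (\<Prod>j\<in>{m+1+1..l-1}. inverse (A j))"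
      unfolding \<open>{m+1..l-1} = insert (m+1) {m+1+1..l-1}\<close> by simp
    finally have e1: "gprod A l m = inverse (A (m+1)) * (\<Prod>j\<in>{m+1+1..l-1}. inverse (A j))" .
    have "\<not> l \<le> m + 1 + 1" using False F2 by auto
    then have e2: "gprod A l (m+1) = (\<Prod>j\<in>{m+1+1..l-1}. inverse (A j))" unfolding gprod_def
      by (simp only: if_False)
    have "m+1+1 = m+2" by simp
    then show ?thesis using e1 e2 nz by simp
  qed
qed

lemma gprod_nz:
  fixes A :: "int \<Rightarrow> 'a::field"
  assumes nz: "\<forall>t. A t \<noteq> 0"
  shows "gprod A l m \<noteq> 0"
  using nz by (simp add: gprod_def)

lemma gprod_concat:
  fixes A :: "int \<Rightarrow> 'a::field"
  assumes nz: "\<forall>t. A t \<noteq> 0"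
  shows "gprod A a c = gprod A a b * gprod A (b + 1) c"
proof (induction c rule: int_induct[where k = b])
  case base
  then show ?case by simp
next
  case (step1 i)
  then show ?case using gprod_step[OF nz] by (simp add: mult.assoc)
next
  case (step2 i)
  have e1: "gprod A a i = gprod A a (i - 1) * A i" using gprod_step[OF nz, of a "i - 1"] by simp
  have e2: "gprod A (b+1) i = gprod A (b+1) (i - 1) * A i" using gprod_step[OF nz, of "b+1" "i - 1"] by simp
  from step2 e1 e2 have "gprod A a (i - 1) * A i = gprod A a b * gprod A (b + 1) (i - 1) * A i"
    by (simp add: mult.assoc)
  then show ?case using nz by simp
qed

lemma gprod_shift:
  fixes A :: "int \<Rightarrow> 'a::field"
  assumes nz: "\<forall>t. A t \<noteq> 0"
  shows "gprod (\<lambda>r. A (r + c)) l m = gprod A (l + c) (m + c)"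
proof (induction m rule: int_induct[where k = "l - 1"])
  case base
  then show ?case by (simp add: gprod_def)
next
  case (step1 i)
  have "gprod (\<lambda>r. A (r + c)) l (i + 1) = gprod (\<lambda>r. A (r + c)) l i * A (i + 1 + c)"
    using gprod_step[of "\<lambda>r. A (r + c)"] nz by simp
  moreover have "gprod A (l + c) (i + c + 1) = gprod A (l + c) (i + c) * A (i + c + 1)"
    using gprod_step[OF nz] by simp
  ultimately show ?case using step1 by (simp add: ac_simps)
next
  case (step2 i)
  have "gprod (\<lambda>r. A (r + c)) l i = gprod (\<lambda>r. A (r + c)) l (i - 1) * A (i + c)"
    using gprod_step[of "\<lambda>r. A (r + c)" l "i - 1"] nz by simp
  moreover have "gprod A (l + c) (i + c) = gprod A (l + c) (i - 1 + c) * A (i + c)"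
    using gprod_step[OF nz, of "l + c" "i - 1 + c"] by (simp add: ac_simps)
  ultimately show ?case using step2 nz by simp
qed

lemma bigW_nz: "\<forall>s t. w s t \<noteq> 0 \<Longrightarrow> bigW w s t \<noteq> 0"
  unfolding bigW_def by (rule gprod_nz) auto

lemma bigW_0[simp]: "bigW w s 0 = 1"
  unfolding bigW_def using gprod_empty[of "w s" 1] by simp



definition wspec :: "(int \<Rightarrow> int \<Rightarrow> 'a::field) \<Rightarrow> (int \<Rightarrow> int \<Rightarrow> 'a) \<Rightarrow> bool" where
  "wspec w f \<longleftrightarrow> (\<forall>n. f n 0 = 1 \<and> f n n = 1) \<and>
      (\<forall>n k. (n + 1, k) \<noteq> (0, 0) \<longrightarrow>
          f (n + 1) k = f n k + f n (k - 1) * bigW w k (n + 1 - k))"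

lemma wbinom_eq: "wbinom w = (THE f. wspec w f)"
  unfolding wbinom_def wspec_def by simp

lemma wspec_rec: "wspec w f \<Longrightarrow> (n + 1, k) \<noteq> (0, 0) \<Longrightarrow>
   f (n + 1) k = f n k + f n (k - 1) * bigW w k (n + 1 - k)"
  unfolding wspec_def by blast

lemma wspec_0: "wspec w f \<Longrightarrow> f n 0 = 1" unfolding wspec_def by blast
lemma wspec_diag: "wspec w f \<Longrightarrow> f n n = 1" unfolding wspec_def by blast

lemma wspec_zero_neg:
  assumes f: "wspec w f" and nz: "\<forall>s t. w s t \<noteq> 0"
  shows "\<forall>N::nat. f (int N) (- int b - 1) = 0"
proof (induction b)
  case 0
  show ?case
  proof
    fix N :: nat
    have "f (int N + 1) 0 = f (int N) 0 + f (int N) (0 - 1) * bigW w 0 (int N + 1 - 0)"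
      by (rule wspec_rec[OF f]) simp
    then have "f (int N) (-1) * bigW w 0 (int N + 1) = 0" using wspec_0[OF f] by simp
    then show "f (int N) (- int 0 - 1) = 0" using bigW_nz[OF nz] by simp
  qed
next
  case (Suc b)
  show ?case
  proof
    fix N :: nat
    have "f (int N + 1) (- int b - 1) = f (int N) (- int b - 1) + f (int N) (- int b - 1 - 1) * bigW w (- int b - 1) (int N + 1 - (- int b - 1))"
      by (rule wspec_rec[OF f]) simp
    moreover have "f (int N + 1) (- int b - 1) = 0" using Suc[rule_format, of "Suc N"] by (simp add: add.commute)
    ultimately have "f (int N) (- int b - 1 - 1) * bigW w (- int b - 1) (int N + 1 - (- int b - 1)) = 0"
      using Suc by simp
    then have "f (int N) (- int b - 1 - 1) = 0" using bigW_nz[OF nz] by simp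
    then show "f (int N) (- int (Suc b) - 1) = 0" by (simp add: algebra_simps)
  qed
qed

lemma wspec_zero_big:
  assumes f: "wspec w f"
  shows "\<forall>N::nat. f (int N) (int N + int b + 1) = 0"
proof (induction b)
  case 0
  show ?case
  proof
    fix N :: nat
    have "f (int N + 1) (int N + 1) = f (int N) (int N + 1) + f (int N) (int N + 1 - 1) * bigW w (int N + 1) (int N + 1 - (int N + 1))"
      by (rule wspec_rec[OF f]) simp
    then show "f (int N) (int N + int 0 + 1) = 0" using wspec_diag[OF f] by simp
  qed
next
  case (Suc b)
  show ?case
  proof
    fix N :: nat
    have "f (int N + 1) (int N + int b + 2) = f (int N) (int N + int b + 2) + f (int N) (int N + int b + 2 - 1) * bigW w (int N + int b + 2) (int N + 1 - (int N + int b + 2))"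
      by (rule wspec_rec[OF f]) simp
    moreover have "f (int N + 1) (int N + int b + 2) = 0" using Suc[rule_format, of "Suc N"] by (simp add: algebra_simps)
    moreover have "f (int N) (int N + int b + 2 - 1) = 0" using Suc[rule_format, of N] by (simp add: algebra_simps)
    ultimately show "f (int N) (int N + int (Suc b) + 1) = 0" by (simp add: algebra_simps)
  qed
qed

lemma wspec_row0:
  assumes f: "wspec w f" and nz: "\<forall>s t. w s t \<noteq> 0"
  shows "f 0 k = (if k = 0 then 1 else 0)"
proof (cases "k = 0")
  case True then show ?thesis using wspec_0[OF f] by simp
next
  case False
  show ?thesis
  proof (cases "k < 0")
    case True
    then show ?thesis using wspec_zero_neg[OF f nz, of "nat (- k - 1)"] by (auto dest: spec[of _ 0])
  next
    case F2: False
    then show ?thesis using False wspec_zero_big[OF f, of "nat (k - 1)"] by (auto dest: spec[of _ 0])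
  qed
qed



lemma wspec_unique:
  assumes g: "wspec w g" and h: "wspec w h" and nz: "\<forall>s t. w s t \<noteq> 0"
  shows "g = h"
proof -
  have Wnz: "\<And>s t. bigW w s t \<noteq> 0" using bigW_nz[OF nz] .
  have down: "\<forall>k. g n k = h n k" if IH: "\<forall>k. g (n + 1) k = h (n + 1) k" for n
  proof
    fix k :: int
    define b where "b = (if n = -1 then -1 else (0::int))"
    have b0: "g n b = h n b"
      using wspec_0[OF g] wspec_0[OF h] wspec_diag[OF g] wspec_diag[OF h] by (simp add: b_def)
    show "g n k = h n k"
    proof (induction k rule: int_induct[where k = b])
      case base then show ?case by (rule b0)
    next
      case (step1 i)
      show ?case
      proof (cases "n + 1 = 0 \<and> i + 1 = 0")
        case True then show ?thesis using wspec_0[OF g] wspec_0[OF h] by auto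
      next
        case False
        then have ne: "(n + 1, i + 1) \<noteq> (0, 0)" by auto
        have "g (n+1) (i+1) = g n (i+1) + g n (i + 1 - 1) * bigW w (i+1) (n + 1 - (i+1))"
          by (rule wspec_rec[OF g ne])
        moreover have "h (n+1) (i+1) = h n (i+1) + h n (i + 1 - 1) * bigW w (i+1) (n + 1 - (i+1))"
          by (rule wspec_rec[OF h ne])
        ultimately show ?thesis using step1 IH by auto
      qed
    next
      case (step2 i)
      have ne: "(n + 1, i) \<noteq> (0, 0)" using step2(1) by (auto simp: b_def)
      have "g (n+1) i = g n i + g n (i - 1) * bigW w i (n + 1 - i)"
        by (rule wspec_rec[OF g ne])
      moreover have "h (n+1) i = h n i + h n (i - 1) * bigW w i (n + 1 - i)"
        by (rule wspec_rec[OF h ne])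
      ultimately have "g n (i - 1) * bigW w i (n + 1 - i) = h n (i - 1) * bigW w i (n + 1 - i)"
        using step2 IH by auto
      then show ?case using Wnz by simp
    qed
  qed
  have up: "\<forall>k. g (n + 1) k = h (n + 1) k" if IH: "\<forall>k. g n k = h n k" and n0: "0 \<le> n" for n
  proof
    fix k :: int
    have ne: "(n + 1, k) \<noteq> (0, 0)" using n0 by auto
    show "g (n + 1) k = h (n + 1) k"
      using wspec_rec[OF g ne] wspec_rec[OF h ne] IH by simp
  qed
  have "\<forall>k. g n k = h n k" for n
  proof (induction n rule: int_induct[where k = 0])
    case base then show ?case using wspec_row0[OF g nz] wspec_row0[OF h nz] by simp
  next
    case (step1 i) then show ?case using up by simp
  next
    case (step2 i) then show ?case using down[of "i - 1"] by simp
  qed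
  then show ?thesis by (intro ext) auto
qed

fun Ppos :: "(int \<Rightarrow> int \<Rightarrow> 'a::field) \<Rightarrow> nat \<Rightarrow> int \<Rightarrow> 'a" where
  "Ppos w 0 k = (if k = 0 then 1 else 0)"
| "Ppos w (Suc N) k = Ppos w N k + Ppos w N (k - 1) * bigW w k (int N + 1 - k)"

fun upr :: "(int \<Rightarrow> int \<Rightarrow> 'a::field) \<Rightarrow> (int \<Rightarrow> 'a) \<Rightarrow> int \<Rightarrow> nat \<Rightarrow> 'a" where
  "upr w g n 0 = 1"
| "upr w g n (Suc i) = g (int i + 1) - upr w g n i * bigW w (int i + 1) (n - int i)"

fun dnr :: "(int \<Rightarrow> int \<Rightarrow> 'a::field) \<Rightarrow> (int \<Rightarrow> 'a) \<Rightarrow> int \<Rightarrow> nat \<Rightarrow> 'a" where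
  "dnr w g n 0 = (if n = -1 then 1 else (g 0 - 1) / bigW w 0 (n + 1))"
| "dnr w g n (Suc i) = (g (- int i - 1) - dnr w g n i) / bigW w (- int i - 1) (n + 2 + int i)"

definition rowf :: "(int \<Rightarrow> int \<Rightarrow> 'a::field) \<Rightarrow> (int \<Rightarrow> 'a) \<Rightarrow> int \<Rightarrow> int \<Rightarrow> 'a" where
  "rowf w g n k = (if 0 \<le> k then upr w g n (nat k) else dnr w g n (nat (- k - 1)))"

fun Rneg :: "(int \<Rightarrow> int \<Rightarrow> 'a::field) \<Rightarrow> nat \<Rightarrow> int \<Rightarrow> 'a" where
  "Rneg w 0 = rowf w (Ppos w 0) (-1)"
| "Rneg w (Suc N) = rowf w (Rneg w N) (- int N - 2)"

definition fcon :: "(int \<Rightarrow> int \<Rightarrow> 'a::field) \<Rightarrow> int \<Rightarrow> int \<Rightarrow> 'a" where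
  "fcon w n = (if 0 \<le> n then Ppos w (nat n) else Rneg w (nat (- n - 1)))"

lemma rowf_rec:
  assumes nz: "\<forall>s t. w s t \<noteq> 0" and ne: "(n + 1, k) \<noteq> (0, 0)"
  shows "g k = rowf w g n k + rowf w g n (k - 1) * bigW w k (n + 1 - k)"
proof -
  have Wnz: "\<And>s t. bigW w s t \<noteq> 0" using bigW_nz[OF nz] .
  consider "k \<ge> 1" | "k = 0" | "k < 0" by linarith
  then show ?thesis
  proof cases
    case 1
    then obtain i where i: "nat k = Suc i" "k = int i + 1" by (metis Suc_nat_eq_nat_zadd1 add.commute nat_int zero_le_imp_eq_int zle_iff_zadd Suc_eq_plus1 of_nat_Suc less_le_trans zero_less_one less_imp_le)
    have "rowf w g n k = g (int i + 1) - upr w g n i * bigW w (int i + 1) (n - int i)"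
      using 1 i by (simp add: rowf_def)
    moreover have "rowf w g n (k - 1) = upr w g n i" using i by (simp add: rowf_def)
    ultimately show ?thesis using i by (simp add: algebra_simps)
  next
    case 2
    then have "n \<noteq> -1" using ne by auto
    then show ?thesis using 2 Wnz by (simp add: rowf_def)
  next
    case 3
    define i where "i = nat (- k - 1)"
    have ki: "k = - int i - 1" using 3 by (simp add: i_def)
    have "nat (- (k - 1) - 1) = Suc i" using 3 by (simp add: i_def)
    then have "rowf w g n (k - 1) = (g (- int i - 1) - dnr w g n i) / bigW w (- int i - 1) (n + 2 + int i)"
      using 3 by (simp add: rowf_def)
    moreover have "rowf w g n k = dnr w g n i" using 3 by (simp add: rowf_def i_def)
    moreover have "n + 2 + int i = n + 1 - k" using ki by simp
    ultimately show ?thesis using ki Wnz by simp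
  qed
qed



lemma Ppos_zero: "\<forall>k. (k < 0 \<or> k > int N) \<longrightarrow> Ppos w N k = 0"
  by (induction N) auto

lemma Ppos_0: "Ppos w N 0 = 1"
proof (induction N)
  case 0 then show ?case by simp
next
  case (Suc N)
  have "Ppos w N (-1) = 0" using Ppos_zero[of N w] by simp
  then show ?case using Suc by simp
qed

lemma Ppos_diag: "Ppos w N (int N) = 1"
proof (induction N)
  case 0 then show ?case by simp
next
  case (Suc N)
  have "Ppos w N (int N + 1) = 0" using Ppos_zero[of N w] by simp
  then show ?case using Suc by (simp add: add.commute)
qed

lemma fcon_nonneg: "0 \<le> n \<Longrightarrow> fcon w n = Ppos w (nat n)"
  by (simp add: fcon_def)

lemma fcon_neg: "n < 0 \<Longrightarrow> fcon w n = rowf w (fcon w (n + 1)) n"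
proof (cases "n = -1")
  case True then show ?thesis by (simp add: fcon_def)
next
  case False
  assume "n < 0"
  define N where "N = nat (- n - 2)"
  have e1: "nat (- n - 1) = Suc N" using \<open>n < 0\<close> False by (simp add: N_def)
  have e2: "nat (- (n + 1) - 1) = N" by (simp add: N_def algebra_simps)
  have e3: "- int N - 2 = n" using \<open>n < 0\<close> False by (simp add: N_def)
  have "fcon w n = Rneg w (Suc N)" using \<open>n < 0\<close> e1 by (simp add: fcon_def)
  also have "\<dots> = rowf w (Rneg w N) n" using e3 by simp
  also have "Rneg w N = fcon w (n + 1)" using \<open>n < 0\<close> False e2 unfolding fcon_def by simp
  finally show ?thesis .
qed

lemma fcon_rec:
  assumes nz: "\<forall>s t. w s t \<noteq> 0" and ne: "(n + 1, k) \<noteq> (0, 0)"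
  shows "fcon w (n + 1) k = fcon w n k + fcon w n (k - 1) * bigW w k (n + 1 - k)"
proof (cases "0 \<le> n")
  case True
  then have "nat (n + 1) = Suc (nat n)" by simp
  then show ?thesis using True by (simp add: fcon_def)
next
  case False
  then show ?thesis using fcon_neg[of n w] rowf_rec[OF nz ne, of "fcon w (n+1)"] by simp
qed

lemma fcon_col0: "fcon w n 0 = 1"
  by (cases "0 \<le> n") (simp_all add: fcon_nonneg fcon_neg Ppos_0 rowf_def)

lemma fcon_m1: "fcon w (-1) (-1) = 1"
  by (simp add: fcon_neg rowf_def)

lemma neg_zeros:
  fixes f :: "int \<Rightarrow> int \<Rightarrow> 'a::field"
  assumes rec: "\<And>n k. (n + 1, k) \<noteq> (0, 0) \<Longrightarrow> f (n + 1) k = f n k + f n (k - 1) * bigW w k (n + 1 - k)"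
    and col: "\<And>n. f n 0 = 1" and nz: "\<forall>s t. w s t \<noteq> 0"
  shows "\<forall>b. b \<le> a \<longrightarrow> f (- int a - 2) (- int b - 1) = 0"
proof (induction a)
  case 0
  have "f (-2 + 1) 0 = f (-2) 0 + f (-2) (0 - 1) * bigW w 0 (-2 + 1 - 0)" by (rule rec) simp
  then have "f (-2) (-1) * bigW w 0 (-1) = 0" using col by simp
  then show ?case using bigW_nz[OF nz] by simp
next
  case (Suc a)
  let ?n = "- int (Suc a) - 2"
  have "f ?n (- int b - 1) = 0" if "b \<le> Suc a" for b
    using that
  proof (induction b)
    case 0
    have "f (?n + 1) 0 = f ?n 0 + f ?n (0 - 1) * bigW w 0 (?n + 1 - 0)" by (rule rec) simp
    then have "f ?n (-1) * bigW w 0 (?n + 1) = 0" using col by simp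
    then show ?case using bigW_nz[OF nz] by simp
  next
    case (Suc b)
    have ne: "(?n + 1, - int b - 1) \<noteq> (0, 0)" by simp
    have "f (?n + 1) (- int b - 1) = f ?n (- int b - 1) + f ?n (- int b - 1 - 1) * bigW w (- int b - 1) (?n + 1 - (- int b - 1))"
      by (rule rec[OF ne])
    moreover have "f (?n + 1) (- int b - 1) = 0"
      using Suc.prems \<open>\<forall>b. b \<le> a \<longrightarrow> f (- int a - 2) (- int b - 1) = 0\<close>
      by (auto simp: algebra_simps)
    moreover have "f ?n (- int b - 1) = 0" using Suc by simp
    ultimately have "f ?n (- int b - 1 - 1) * bigW w (- int b - 1) (?n + 1 - (- int b - 1)) = 0" by simp
    then have "f ?n (- int b - 1 - 1) = 0" using bigW_nz[OF nz] by simp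
    then show ?case by (simp add: algebra_simps)
  qed
  then show ?case by blast
qed

lemma fcon_diag_neg:
  assumes nz: "\<forall>s t. w s t \<noteq> 0"
  shows "fcon w (- int a - 1) (- int a - 1) = 1"
proof (induction a)
  case 0 then show ?case using fcon_m1 by simp
next
  case (Suc a)
  let ?n = "- int (Suc a) - 1"
  have z0: "fcon w (- int a - 2) (- int a - 1) = 0"
    using neg_zeros[OF fcon_rec[OF nz] fcon_col0 nz, of a, rule_format, of a] by simp
  have e1: "?n = - int a - 2" "?n + 1 = - int a - 1" by simp_all
  have z: "fcon w ?n (?n + 1) = 0" unfolding e1(2) unfolding e1(1) by (rule z0)
  have "fcon w (?n + 1) (?n + 1) = fcon w ?n (?n + 1) + fcon w ?n (?n + 1 - 1) * bigW w (?n + 1) (?n + 1 - (?n + 1))"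
    by (rule fcon_rec[OF nz]) simp
  then have "fcon w (?n + 1) (?n + 1) = fcon w ?n ?n"
    using z by simp
  moreover have "fcon w (?n + 1) (?n + 1) = 1" unfolding e1(2) by (rule Suc)
  ultimately show ?case by simp
qed

lemma fcon_diag:
  assumes nz: "\<forall>s t. w s t \<noteq> 0"
  shows "fcon w n n = 1"
proof (cases "0 \<le> n")
  case True then show ?thesis using Ppos_diag[of w "nat n"] by (simp add: fcon_nonneg)
next
  case False
  then show ?thesis using fcon_diag_neg[OF nz, of "nat (- n - 1)"] by simp
qed

lemma wspec_fcon: "\<forall>s t. w s t \<noteq> 0 \<Longrightarrow> wspec w (fcon w)"
  unfolding wspec_def using fcon_col0 fcon_diag fcon_rec by blast

lemma wbinom_spec: "\<forall>s t. w s t \<noteq> 0 \<Longrightarrow> wspec w (wbinom w)"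
  unfolding wbinom_eq
  by (rule theI[of "wspec w" "fcon w"]) (auto intro: wspec_fcon wspec_unique)



lemma bigW_shift_mul:
  fixes w :: "int \<Rightarrow> int \<Rightarrow> 'a::field"
  assumes nz: "\<forall>s t. w s t \<noteq> 0"
  shows "bigW (\<lambda>s t. w (s + j) (t + n - j)) (k - j) t * bigW w k (n - j) = bigW w k (n - j + t)"
proof -
  have A: "\<forall>r. w k r \<noteq> 0" using nz by auto
  have "bigW (\<lambda>s t. w (s + j) (t + n - j)) (k - j) t = gprod (\<lambda>r. w k (r + (n - j))) 1 t"
    unfolding bigW_def by (simp add: algebra_simps)
  also have "\<dots> = gprod (w k) (1 + (n - j)) (t + (n - j))" by (rule gprod_shift[OF A])
  finally have e: "bigW (\<lambda>s t. w (s + j) (t + n - j)) (k - j) t = gprod (w k) (n - j + 1) (n - j + t)"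
    by (simp add: algebra_simps)
  have "bigW w k (n - j + t) = gprod (w k) 1 (n - j) * gprod (w k) (n - j + 1) (n - j + t)"
    unfolding bigW_def by (rule gprod_concat[OF A])
  then show ?thesis using e by (simp add: bigW_def mult.commute)
qed

theorem corollary1:
  fixes w :: "int \<Rightarrow> int \<Rightarrow> 'a::field" and n m k :: int
  assumes "\<forall>s t. w s t \<noteq> 0" and "0 \<le> k"
  shows "wbinom w (n + m) k =
    (\<Sum>j\<in>{0..k}. wbinom w n j * wbinom (\<lambda>s t. w (s + j) (t + n - j)) m (k - j)
        * (\<Prod>i\<in>{1..k - j}. bigW w (i + j) (n - j)))"
proof -
  note nz = assms(1)
  define F where "F = wbinom w"
  define G where "G = (\<lambda>j. wbinom (\<lambda>s t. w (s + j) (t + n - j)))"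
  define Pp where "Pp = (\<lambda>k j. \<Prod>i\<in>{1..k - j}. bigW w (i + j) (n - j))"
  define RHS where "RHS = (\<lambda>m k. \<Sum>j\<in>{0..k}. F n j * G j m (k - j) * Pp k j)"
  have Fs: "wspec w F" unfolding F_def by (rule wbinom_spec[OF nz])
  have nzj: "\<forall>s t. (\<lambda>s t. w (s + j) (t + n - j)) s t \<noteq> 0" for j using nz by simp
  have Gs: "wspec (\<lambda>s t. w (s + j) (t + n - j)) (G j)" for j
    unfolding G_def by (rule wbinom_spec[OF nzj])
  have Ppkk: "Pp k k = 1" for k by (simp add: Pp_def)
  have Ppstep: "Pp k j = Pp (k - 1) j * bigW w k (n - j)" if "j \<le> k - 1" for k j
  proof -
    have "{1..k - j} = insert (k - j) {1..k - 1 - j}" using that by auto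
    then show ?thesis unfolding Pp_def by (simp add: mult.commute)
  qed
  have RHS0: "RHS m 0 = 1" for m
    unfolding RHS_def using wspec_0[OF Fs] wspec_0[OF Gs] Ppkk by simp
  have RHSstep: "RHS (m + 1) k = RHS m k + bigW w k (n + m + 1 - k) * RHS m (k - 1)"
    if k1: "1 \<le> k" for m k
  proof -
    have S: "{0..k} = insert k {0..k - 1}" using k1 by auto
    have trm: "F n j * G j (m + 1) (k - j) * Pp k j =
       F n j * G j m (k - j) * Pp k j + bigW w k (n + m + 1 - k) * (F n j * G j m (k - 1 - j) * Pp (k - 1) j)"
      if j: "j \<in> {0..k - 1}" for j
    proof -
      have ne: "(m + 1, k - j) \<noteq> (0, 0)" using j by auto
      have g: "G j (m + 1) (k - j) = G j m (k - j) + G j m (k - j - 1) * bigW (\<lambda>s t. w (s + j) (t + n - j)) (k - j) (m + 1 - (k - j))"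
        by (rule wspec_rec[OF Gs ne])
      have B: "bigW (\<lambda>s t. w (s + j) (t + n - j)) (k - j) (m + 1 - (k - j)) * bigW w k (n - j) = bigW w k (n + m + 1 - k)"
        using bigW_shift_mul[OF nz, of j n k "m + 1 - (k - j)"] by (simp add: algebra_simps)
      have P: "Pp k j = Pp (k - 1) j * bigW w k (n - j)" using j by (intro Ppstep) auto
      show ?thesis unfolding g P using B[symmetric]
        by (simp add: algebra_simps)
    qed
    have "RHS (m + 1) k = (\<Sum>j\<in>{0..k - 1}. F n j * G j (m + 1) (k - j) * Pp k j) + F n k * G k (m + 1) 0 * Pp k k"
      unfolding RHS_def S by (simp add: add.commute)
    also have "\<dots> = (\<Sum>j\<in>{0..k - 1}. F n j * G j m (k - j) * Pp k j + bigW w k (n + m + 1 - k) * (F n j * G j m (k - 1 - j) * Pp (k - 1) j)) + F n k * G k m 0 * Pp k k"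
      using trm wspec_0[OF Gs] by simp
    also have "\<dots> = ((\<Sum>j\<in>{0..k - 1}. F n j * G j m (k - j) * Pp k j) + F n k * G k m (k - k) * Pp k k) + bigW w k (n + m + 1 - k) * RHS m (k - 1)"
      unfolding RHS_def sum.distrib sum_distrib_left by simp
    also have "(\<Sum>j\<in>{0..k - 1}. F n j * G j m (k - j) * Pp k j) + F n k * G k m (k - k) * Pp k k = RHS m k"
      unfolding RHS_def S by (simp add: add.commute)
    finally show ?thesis .
  qed
  define D where "D = (\<lambda>m k. F (n + m) k - RHS m k)"
  have D0: "D m 0 = 0" for m unfolding D_def using RHS0 wspec_0[OF Fs] by simp
  have Dstep: "D (m + 1) k = D m k + bigW w k (n + m + 1 - k) * D m (k - 1)" if "1 \<le> k" for m k
  proof -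
    have ne: "(n + m + 1, k) \<noteq> (0, 0)" using that by auto
    have "F (n + m + 1) k = F (n + m) k + F (n + m) (k - 1) * bigW w k (n + m + 1 - k)"
      using wspec_rec[OF Fs ne] by simp
    then show ?thesis unfolding D_def using RHSstep[OF that, of m] by (simp add: algebra_simps)
  qed
  have Dbase: "D 0 k = 0" if "0 \<le> k" for k
  proof -
    have "RHS 0 k = (\<Sum>j\<in>{0..k}. if j = k then F n j * Pp k j else 0)"
      unfolding RHS_def
    proof (rule sum.cong)
      fix j assume "j \<in> {0..k}"
      show "F n j * G j 0 (k - j) * Pp k j = (if j = k then F n j * Pp k j else 0)"
        using wspec_row0[OF Gs nzj, of j "k - j"] by auto
    qed simp
    also have "\<dots> = F n k" using that Ppkk by simp
    finally show ?thesis unfolding D_def by simp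
  qed
  have Dall: "\<forall>k\<ge>0. D m k = 0" for m
  proof (induction m rule: int_induct[where k = 0])
    case base then show ?case using Dbase by simp
  next
    case (step1 i)
    show ?case
    proof (intro allI impI)
      fix k :: int assume "0 \<le> k"
      show "D (i + 1) k = 0"
      proof (cases "k = 0")
        case True then show ?thesis using D0 by simp
      next
        case False
        then show ?thesis using Dstep[of k i] step1 \<open>0 \<le> k\<close> by simp
      qed
    qed
  next
    case (step2 i)
    have "D (i - 1) (int k') = 0" for k'
    proof (induction k')
      case 0 then show ?case using D0 by simp
    next
      case (Suc k')
      have "D (i - 1 + 1) (int k' + 1) = D (i - 1) (int k' + 1) + bigW w (int k' + 1) (n + (i - 1) + 1 - (int k' + 1)) * D (i - 1) (int k' + 1 - 1)"
        by (rule Dstep) simp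
      then show ?case using Suc step2 by (simp add: add.commute)
    qed
    then show ?case by (metis nonneg_eq_int)
  qed
  then have "D m k = 0" using assms(2) by simp
  then show ?thesis unfolding D_def RHS_def F_def G_def Pp_def by simp
qed

end
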